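(* Let $\beta=(\pi_\ell)_{\ell=1}^L$ be a chainable architecture of depth $L\ge 2$. Then $\mathcal{B}^\beta\subseteq\mathcal{B}^{\beta_s}$ for every $s\in\{1,\dots,L-1\}$. Consequently, for every complex matrix $\mathbf{A}$ of appropriate size, $$E^\beta(\mathbf{A})\ge\max_{1\le s\le L-1}E^{\beta_s}(\mathbf{A}).$$
   Context: A pattern is a tuple $\pi=(a,b,c,d)$ of positive integers; $\mathbf{S}_\pi:=\mathbf{I}_a\otimes\mathbf{1}_{b\times c}\otimes\mathbf{I}_d\in\{0,1\}^{abd\times acd}$. A $\pi$-factor is a complex $abd\times acd$ matrix with support in that of $\mathbf{S}_\pi$; $\Sigma^\pi$ is the set of $\pi$-factors. Patterns $\pi=(a,b,c,d),\pi'=(a',b',c',d')$ are chainable if $ac/a'=b'd'/d$ is an integer, $a\mid a'$, $d'\mid d$; then $\pi*\pi':=(a,bd/d',a'c'/a,d')$. An architecture $\beta=(\pi_\ell)_{\ell=1}^L$ is a sequence of patterns with $a_\ell c_\ell d_\ell=a_{\ell+1}b_{\ell+1}d_{\ell+1}$, chainable if consecutive pairs are chainable; $\pi_p*\cdots*\pi_q$ is the iterated product. For an architecture $\alpha=(\pi'_\ell)_{\ell=1}^K$, $\mathcal{B}^\alpha:=\{\mathbf{X}_1\cdots\mathbf{X}_K:\mathbf{X}_\ell\in\Sigma^{\pi'_\ell}\}$ and $E^\alpha(\mathbf{A}):=\inf_{\mathbf{B}\in\mathcal{B}^\alpha}\|\mathbf{A}-\mathbf{B}\|_F$. For $s\in\{1,\dots,L-1\}$,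 $\beta_s:=(\pi_1*\cdots*\pi_s,\ \pi_{s+1}*\cdots*\pi_L)$. *)

theory Defs
  imports Complex_Main "Jordan_Normal_Form.Matrix"
begin

type_synonym pattern = "nat \<times> nat \<times> nat \<times> nat"

definition pat_pos :: "pattern \<Rightarrow> bool" where
  "pat_pos \<pi> = (case \<pi> of (a,b,c,d) \<Rightarrow> 0 < a \<and> 0 < b \<and> 0 < c \<and> 0 < d)"

definition pat_rows :: "pattern \<Rightarrow> nat" where
  "pat_rows \<pi> = (case \<pi> of (a,b,c,d) \<Rightarrow> a*b*d)"

definition pat_cols :: "pattern \<Rightarrow> nat" where
  "pat_cols \<pi> = (case \<pi> of (a,b,c,d) \<Rightarrow> a*c*d)"

text \<open>Support matrix S_pi = I_a (x) 1_{b x c} (x) I_d, entrywise (0-based indices).\<close>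
definition S_pat :: "pattern \<Rightarrow> complex mat" where
  "S_pat \<pi> = (case \<pi> of (a,b,c,d) \<Rightarrow>
     mat (a*b*d) (a*c*d) (\<lambda>(i,j). if i div (b*d) = j div (c*d) \<and> i mod d = j mod d then 1 else 0))"

definition Sigma_pat :: "pattern \<Rightarrow> complex mat set" where
  "Sigma_pat \<pi> = {X. dim_row X = pat_rows \<pi> \<and> dim_col X = pat_cols \<pi> \<and>
      (\<forall>i < pat_rows \<pi>. \<forall>j < pat_cols \<pi>. S_pat \<pi> $$ (i,j) = 0 \<longrightarrow> X $$ (i,j) = 0)}"

definition chainable_pat :: "pattern \<Rightarrow> pattern \<Rightarrow> bool" where
  "chainable_pat \<pi> \<pi>' = (case \<pi> of (a,b,c,d) \<Rightarrow> case \<pi>' of (a',b',c',d') \<Rightarrow>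
      a' dvd a*c \<and> a*c*d = b'*d'*a' \<and> a dvd a' \<and> d' dvd d)"

definition star_pat :: "pattern \<Rightarrow> pattern \<Rightarrow> pattern" where
  "star_pat \<pi> \<pi>' = (case \<pi> of (a,b,c,d) \<Rightarrow> case \<pi>' of (a',b',c',d') \<Rightarrow>
      (a, b*d div d', a'*c' div a, d'))"

fun iter_star :: "pattern list \<Rightarrow> pattern" where
  "iter_star [] = undefined"
| "iter_star (p # ps) = foldl star_pat p ps"

definition architecture :: "pattern list \<Rightarrow> bool" where
  "architecture \<beta> = (\<beta> \<noteq> [] \<and> (\<forall>\<pi>\<in>set \<beta>. pat_pos \<pi>) \<and>
      (\<forall>l. Suc l < length \<beta> \<longrightarrow> pat_cols (\<beta>!l) = pat_rows (\<beta>!Suc l)))"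

definition chainable_arch :: "pattern list \<Rightarrow> bool" where
  "chainable_arch \<beta> = (architecture \<beta> \<and>
      (\<forall>l. Suc l < length \<beta> \<longrightarrow> chainable_pat (\<beta>!l) (\<beta>!Suc l)))"

fun mat_prod_list :: "complex mat list \<Rightarrow> complex mat" where
  "mat_prod_list [] = undefined"
| "mat_prod_list [X] = X"
| "mat_prod_list (X # Xs) = X * mat_prod_list Xs"

definition B_arch :: "pattern list \<Rightarrow> complex mat set" where
  "B_arch \<alpha> = {mat_prod_list Xs | Xs. length Xs = length \<alpha> \<and>
      (\<forall>l < length \<alpha>. Xs!l \<in> Sigma_pat (\<alpha>!l))}"

definition frob_norm :: "complex mat \<Rightarrow> real" where
  "frob_norm M = sqrt (\<Sum>i<dim_row M. \<Sum>j<dim_col M. (cmod (M $$ (i,j)))^2)"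

definition E_arch :: "pattern list \<Rightarrow> complex mat \<Rightarrow> real" where
  "E_arch \<alpha> A = (INF B\<in>B_arch \<alpha>. frob_norm (A - B))"

definition beta_split :: "pattern list \<Rightarrow> nat \<Rightarrow> pattern list" where
  "beta_split \<beta> s = [iter_star (take s \<beta>), iter_star (drop s \<beta>)]"

end

theory Submission imports Defs begin

lemma div_key:
  fixes i j k b d c m b' d' c' :: nat
  assumes "i div (b*d) = k div (c*d)" "k div (b'*d') = j div (c'*d')" "c*d = m*b'*d'"
  shows "i div (b*d) = j div (m*c'*d')"
proof -
  have "k div (c*d) = k div (b'*d') div m" using assms(3)
    by (simp add: div_mult2_eq mult.commute mult.left_commute)
  also have "\<dots> = j div (c'*d') div m" using assms(2) by simp
  also have "\<dots> = j div (m*c'*d')" by (simp add: div_mult2_eq mult.commute mult.left_commute)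
  finally show ?thesis using assms(1) by simp
qed

lemma star_sigma:
  assumes ch: "chainable_pat p q" and pp: "pat_pos p" and pq: "pat_pos q"
    and X: "X \<in> Sigma_pat p" and Y: "Y \<in> Sigma_pat q"
  shows "X * Y \<in> Sigma_pat (star_pat p q)"
proof -
  obtain a b c d where p: "p = (a,b,c,d)" by (cases p) auto
  obtain a' b' c' d' where q: "q = (a',b',c',d')" by (cases q) auto
  have pos: "0<a" "0<b" "0<c" "0<d" "0<a'" "0<b'" "0<c'" "0<d'" using pp pq p q by (auto simp: pat_pos_def)
  have c1: "a*c*d = b'*d'*a'" "a dvd a'" "d' dvd d" using ch p q by (auto simp: chainable_pat_def)
  obtain m where m: "a' = a*m" using c1(2) by auto
  obtain e where e: "d = d'*e" using c1(3) by auto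
  have cd: "c*d = m*b'*d'" using c1(1) m pos by (simp add: algebra_simps)
  have r1: "b*d div d' * d' = b*d" using e pos by simp
  have r2: "a'*c' div a * d' = m*c'*d'" using m pos by simp
  have dX: "dim_row X = a*b*d" "dim_col X = a*c*d" using X p by (auto simp: Sigma_pat_def pat_rows_def pat_cols_def)
  have dY: "dim_row Y = a'*b'*d'" "dim_col Y = a'*c'*d'" using Y q by (auto simp: Sigma_pat_def pat_rows_def pat_cols_def)
  have sX: "\<And>i k. i < a*b*d \<Longrightarrow> k < a*c*d \<Longrightarrow> X $$ (i,k) \<noteq> 0 \<Longrightarrow> i div (b*d) = k div (c*d) \<and> i mod d = k mod d"
    using X p by (auto simp: Sigma_pat_def pat_rows_def pat_cols_def S_pat_def split: if_splits)
  have sY: "\<And>k j. k < a'*b'*d' \<Longrightarrow> j < a'*c'*d' \<Longrightarrow> Y $$ (k,j) \<noteq> 0 \<Longrightarrow> k div (b'*d') = j div (c'*d') \<and> k mod d' = j mod d'"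
    using Y q by (auto simp: Sigma_pat_def pat_rows_def pat_cols_def S_pat_def split: if_splits)
  have st: "star_pat p q = (a, b*d div d', a'*c' div a, d')" using p q by (simp add: star_pat_def)
  have rows: "pat_rows (star_pat p q) = a*b*d" using st r1 by (simp add: pat_rows_def mult.assoc)
  have cols: "pat_cols (star_pat p q) = a'*c'*d'" using st r2 m by (simp add: pat_cols_def mult.assoc mult.left_commute)
  show ?thesis unfolding Sigma_pat_def
  proof (intro CollectI conjI allI impI)
    show "dim_row (X*Y) = pat_rows (star_pat p q)" using dX rows by simp
    show "dim_col (X*Y) = pat_cols (star_pat p q)" using dY cols by simp
    fix i j assume i: "i < pat_rows (star_pat p q)" and j: "j < pat_cols (star_pat p q)"
      and S: "S_pat (star_pat p q) $$ (i, j) = 0"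
    have i': "i < a*b*d" and j': "j < a'*c'*d'" using i j rows cols by auto
    have Sn: "\<not> (i div (b*d) = j div (m*c'*d') \<and> i mod d' = j mod d')"
      using S i' j' st r1 r2 m by (auto simp: S_pat_def mult.assoc)
    have "(X*Y) $$ (i,j) = (\<Sum>k<a*c*d. X $$ (i,k) * Y $$ (k,j))"
      using i' j' dX dY c1(1) by (simp add: scalar_prod_def lessThan_atLeast0 row_def col_def mult.commute mult.left_commute)
    also have "\<dots> = 0"
    proof (rule sum.neutral, rule ballI)
      fix k assume k: "k \<in> {..<a*c*d}"
      show "X $$ (i,k) * Y $$ (k,j) = 0"
      proof (rule ccontr)
        assume "X $$ (i,k) * Y $$ (k,j) \<noteq> 0"
        then have nx: "X $$ (i,k) \<noteq> 0" and ny: "Y $$ (k,j) \<noteq> 0" by auto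
        have k2: "k < a'*b'*d'" using k c1(1) by (simp add: mult.commute mult.left_commute)
        from sX[OF i' _ nx] k have h1: "i div (b*d) = k div (c*d)" "i mod d = k mod d" by auto
        from sY[OF k2 j' ny] have h2: "k div (b'*d') = j div (c'*d')" "k mod d' = j mod d'" by auto
        have "i div (b*d) = j div (m*c'*d')" using div_key[OF h1(1) h2(1) cd] .
        moreover have "i mod d' = j mod d'"
        proof -
          have "i mod d' = i mod d mod d'" using e by (simp add: mod_mult2_eq mod_mod_cancel)
          also have "\<dots> = k mod d mod d'" using h1(2) by simp
          also have "\<dots> = k mod d'" using e by (simp add: mod_mod_cancel)
          finally show ?thesis using h2(2) by simp
        qed
        ultimately show False using Sn by simp
      qed
    qed
    finally show "(X*Y) $$ (i,j) = 0" .
  qed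
qed


lemma chain_cols:
  assumes "chainable_pat p q" shows "pat_cols p = pat_rows q"
proof -
  obtain a b c d where p: "p = (a,b,c,d)" by (cases p) auto
  obtain a' b' c' d' where q: "q = (a',b',c',d')" by (cases q) auto
  have "a*c*d = b'*d'*a'" using assms p q by (simp add: chainable_pat_def)
  moreover have "b'*d'*a' = a'*b'*d'" by (simp only: mult.commute mult.left_commute)
  ultimately show ?thesis using p q by (simp add: pat_cols_def pat_rows_def)
qed

lemma star_chain:
  assumes "chainable_pat p q" "chainable_pat q r"
  shows "chainable_pat (star_pat p q) r"
proof -
  obtain a b c d where p: "p = (a,b,c,d)" by (cases p) auto
  obtain a' b' c' d' where q: "q = (a',b',c',d')" by (cases q) auto
  obtain a'' b'' c'' d'' where r: "r = (a'',b'',c'',d'')" by (cases r) auto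
  have c1: "a dvd a'" "d' dvd d" using assms(1) p q by (simp_all add: chainable_pat_def)
  have c2: "a'' dvd a'*c'" "a'*c'*d' = b''*d''*a''" "a' dvd a''" "d'' dvd d'"
    using assms(2) q r by (simp_all add: chainable_pat_def)
  have e: "a * (a'*c' div a) = a'*c'" using c1(1) by (simp add: dvd_mult2)
  have st: "star_pat p q = (a, b*d div d', a'*c' div a, d')" using p q by (simp add: star_pat_def)
  have "a dvd a''" using c1(1) c2(3) by (rule dvd_trans)
  then show ?thesis unfolding st r chainable_pat_def using e c2 by simp
qed

lemma star_pos:
  assumes "chainable_pat p q" "pat_pos p" "pat_pos q"
  shows "pat_pos (star_pat p q)"
proof -
  obtain a b c d where p: "p = (a,b,c,d)" by (cases p) auto
  obtain a' b' c' d' where q: "q = (a',b',c',d')" by (cases q) auto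
  have c1: "a dvd a'" "d' dvd d" using assms(1) p q by (auto simp: chainable_pat_def)
  have pos: "0<a" "0<b" "0<c" "0<d" "0<a'" "0<b'" "0<c'" "0<d'" using assms p q by (auto simp: pat_pos_def)
  have "d' \<le> d" using c1(2) pos by (simp add: dvd_imp_le)
  then have "d' \<le> b*d" using pos by (metis le_trans mult_le_mono1 One_nat_def Suc_leI mult_1)
  then have g1: "0 < b*d div d'" using pos by (simp add: div_greater_zero_iff)
  have "a \<le> a'" using c1(1) pos by (simp add: dvd_imp_le)
  then have "a \<le> a'*c'" using pos by (metis le_trans mult_le_mono2 One_nat_def Suc_leI mult_1_right)
  then have g2: "0 < a'*c' div a" using pos by (simp add: div_greater_zero_iff)
  show ?thesis using p q pos g1 g2 by (simp add: pat_pos_def star_pat_def)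
qed

lemma mpl_carrier:
  "Xs \<noteq> [] \<Longrightarrow> (\<forall>l<length Xs. Xs!l \<in> carrier_mat (r l) (r (Suc l))) \<Longrightarrow>
     mat_prod_list Xs \<in> carrier_mat (r 0) (r (length Xs))"
proof (induction Xs arbitrary: r)
  case Nil then show ?case by simp
next
  case (Cons X Xs)
  show ?case
  proof (cases "Xs = []")
    case True then show ?thesis using Cons.prems by auto
  next
    case False
    have h: "\<forall>l<length Xs. Xs!l \<in> carrier_mat ((\<lambda>l. r (Suc l)) l) ((\<lambda>l. r (Suc l)) (Suc l))"
      using Cons.prems(2) by auto
    have "mat_prod_list Xs \<in> carrier_mat (r 1) (r (Suc (length Xs)))"
      using Cons.IH[OF False h] by simp
    moreover have "X \<in> carrier_mat (r 0) (r 1)" using Cons.prems(2) by (metis length_Cons nth_Cons_0 zero_less_Suc One_nat_def)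
    moreover have "mat_prod_list (X # Xs) = X * mat_prod_list Xs" using False by (cases Xs) auto
    ultimately show ?thesis by auto
  qed
qed

lemma mpl_append:
  "Xs \<noteq> [] \<Longrightarrow> Ys \<noteq> [] \<Longrightarrow> (\<forall>l<length (Xs@Ys). (Xs@Ys)!l \<in> carrier_mat (r l) (r (Suc l))) \<Longrightarrow>
     mat_prod_list (Xs@Ys) = mat_prod_list Xs * mat_prod_list Ys"
proof (induction Xs arbitrary: r)
  case Nil then show ?case by simp
next
  case (Cons X Xs)
  have X: "X \<in> carrier_mat (r 0) (r 1)" using Cons.prems(3) by (metis append_Cons length_Cons nth_Cons_0 zero_less_Suc One_nat_def)
  show ?case
  proof (cases "Xs = []")
    case True
    then show ?thesis using Cons.prems(2) by (cases Ys) auto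
  next
    case False
    have h: "\<forall>l<length (Xs@Ys). (Xs@Ys)!l \<in> carrier_mat ((\<lambda>l. r (Suc l)) l) ((\<lambda>l. r (Suc l)) (Suc l))"
      using Cons.prems(3) by auto
    have IH: "mat_prod_list (Xs@Ys) = mat_prod_list Xs * mat_prod_list Ys"
      using Cons.IH[OF False Cons.prems(2) h] .
    have h1: "\<forall>l<length Xs. Xs!l \<in> carrier_mat ((\<lambda>l. r (Suc l)) l) ((\<lambda>l. r (Suc l)) (Suc l))"
    proof (intro allI impI)
      fix l assume "l < length Xs"
      then show "Xs!l \<in> carrier_mat ((\<lambda>l. r (Suc l)) l) ((\<lambda>l. r (Suc l)) (Suc l))"
        using h[rule_format, of l] by (simp add: nth_append)
    qed
    have h2: "\<forall>l<length Ys. Ys!l \<in> carrier_mat ((\<lambda>l. r (Suc (length Xs + l))) l) ((\<lambda>l. r (Suc (length Xs + l))) (Suc l))"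
    proof (intro allI impI)
      fix l assume "l < length Ys"
      then have "(Xs@Ys)!(length Xs + l) \<in> carrier_mat (r (Suc (length Xs + l))) (r (Suc (Suc (length Xs + l))))"
        using h[rule_format, of "length Xs + l"] by simp
      then show "Ys!l \<in> carrier_mat ((\<lambda>l. r (Suc (length Xs + l))) l) ((\<lambda>l. r (Suc (length Xs + l))) (Suc l))"
        by (simp add: nth_append)
    qed
    have C1: "mat_prod_list Xs \<in> carrier_mat (r 1) (r (Suc (length Xs)))"
      using mpl_carrier[OF False h1] by simp
    have C2: "mat_prod_list Ys \<in> carrier_mat (r (Suc (length Xs))) (r (Suc (length Xs + length Ys)))"
      using mpl_carrier[OF Cons.prems(2) h2] by simp
    have "mat_prod_list ((X # Xs) @ Ys) = X * mat_prod_list (Xs @ Ys)"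
      using False by (cases Xs) auto
    also have "\<dots> = X * (mat_prod_list Xs * mat_prod_list Ys)" using IH by simp
    also have "\<dots> = (X * mat_prod_list Xs) * mat_prod_list Ys"
      using X C1 C2 by (simp add: assoc_mult_mat)
    also have "X * mat_prod_list Xs = mat_prod_list (X # Xs)" using False by (cases Xs) auto
    finally show ?thesis .
  qed
qed

definition chain :: "pattern list \<Rightarrow> bool" where
  "chain ps = ((\<forall>p\<in>set ps. pat_pos p) \<and> (\<forall>l. Suc l < length ps \<longrightarrow> chainable_pat (ps!l) (ps!Suc l)))"

definition rr :: "pattern list \<Rightarrow> nat \<Rightarrow> nat" where
  "rr ps l = (if l < length ps then pat_rows (ps!l) else pat_cols (last ps))"

lemma sig_carrier:
  assumes "chain ps" "length Xs = length ps" "\<forall>l<length ps. Xs!l \<in> Sigma_pat (ps!l)"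
  shows "\<forall>l<length Xs. Xs!l \<in> carrier_mat (rr ps l) (rr ps (Suc l))"
proof (intro allI impI)
  fix l assume l: "l < length Xs"
  have lp: "l < length ps" using l assms(2) by simp
  have S: "Xs!l \<in> Sigma_pat (ps!l)" using assms(3) lp by blast
  have d1: "dim_row (Xs!l) = pat_rows (ps!l)" "dim_col (Xs!l) = pat_cols (ps!l)"
    using S unfolding Sigma_pat_def by blast+
  have r1: "rr ps l = pat_rows (ps!l)" using lp by (simp add: rr_def)
  have "pat_cols (ps!l) = rr ps (Suc l)"
  proof (cases "Suc l < length ps")
    case True
    then have "chainable_pat (ps!l) (ps!Suc l)" using assms(1) unfolding chain_def by blast
    then have "pat_cols (ps!l) = pat_rows (ps!Suc l)" by (rule chain_cols)
    then show ?thesis using True by (simp add: rr_def)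
  next
    case False
    then have "ps \<noteq> []" "l = length ps - 1" using lp by auto
    then have "ps!l = last ps" by (simp add: last_conv_nth)
    then show ?thesis using False by (simp add: rr_def)
  qed
  then show "Xs!l \<in> carrier_mat (rr ps l) (rr ps (Suc l))"
    using d1 r1 unfolding carrier_mat_def by simp
qed

lemma main_ind:
  "ps \<noteq> [] \<Longrightarrow> chain ps \<Longrightarrow> length Xs = length ps \<Longrightarrow> \<forall>l<length ps. Xs!l \<in> Sigma_pat (ps!l) \<Longrightarrow>
    mat_prod_list Xs \<in> Sigma_pat (iter_star ps) \<and> pat_pos (iter_star ps) \<and>
    (\<forall>q. chainable_pat (last ps) q \<longrightarrow> chainable_pat (iter_star ps) q)"
proof (induction ps arbitrary: Xs rule: rev_induct)
  case Nil then show ?case by simp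
next
  case (snoc p ps)
  obtain Xs0 Y where XY: "Xs = Xs0 @ [Y]" using snoc.prems(3)
    by (metis length_0_conv rev_exhaust snoc_eq_iff_butlast Nil_is_append_conv not_Cons_self2)
  have len0: "length Xs0 = length ps" using XY snoc.prems(3) by simp
  have Yp: "Y \<in> Sigma_pat p" using snoc.prems(4) XY len0
    by (metis length_append_singleton lessI nth_append_length)
  have pp: "pat_pos p" using snoc.prems(2) by (auto simp: chain_def)
  show ?case
  proof (cases "ps = []")
    case True
    then have "Xs = [Y]" using XY len0 by simp
    then have "mat_prod_list Xs = Y" by simp
    moreover have "iter_star (ps @ [p]) = p" "last (ps @ [p]) = p" using True by simp_all
    ultimately show ?thesis using Yp pp by metis
  next
    case False
    have ch0: "chain ps" unfolding chain_def
    proof (intro conjI allI impI)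
      show "\<forall>p\<in>set ps. pat_pos p" using snoc.prems(2) by (auto simp: chain_def)
      fix l assume l: "Suc l < length ps"
      then have "chainable_pat ((ps@[p])!l) ((ps@[p])!Suc l)" using snoc.prems(2) by (auto simp: chain_def)
      then show "chainable_pat (ps!l) (ps!Suc l)" using l by (simp add: nth_append)
    qed
    have S0: "\<forall>l<length ps. Xs0!l \<in> Sigma_pat (ps!l)"
    proof (intro allI impI)
      fix l assume "l < length ps"
      then show "Xs0!l \<in> Sigma_pat (ps!l)" using snoc.prems(4) XY len0
        by (metis (no_types, lifting) length_append_singleton less_SucI nth_append)
    qed
    note IH = snoc.IH[OF False ch0 len0 S0]
    have lastc: "chainable_pat (last ps) p"
    proof -
      have "Suc (length ps - 1) < length (ps @ [p])" using False by simp
      then have "chainable_pat ((ps@[p])!(length ps - 1)) ((ps@[p])!Suc (length ps - 1))"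
        using snoc.prems(2) by (auto simp: chain_def)
      then show ?thesis using False by (simp add: nth_append last_conv_nth)
    qed
    have ci: "chainable_pat (iter_star ps) p" using IH lastc by blast
    have it: "iter_star (ps @ [p]) = star_pat (iter_star ps) p"
      using False by (cases ps) auto
    have "mat_prod_list Xs = mat_prod_list Xs0 * mat_prod_list [Y]"
      unfolding XY
    proof (rule mpl_append[where r = "rr (ps@[p])"])
      show "Xs0 \<noteq> []" using False len0 by auto
      show "[Y] \<noteq> []" by simp
      show "\<forall>l<length (Xs0 @ [Y]). (Xs0 @ [Y]) ! l \<in> carrier_mat (rr (ps @ [p]) l) (rr (ps @ [p]) (Suc l))"
        using sig_carrier[OF snoc.prems(2) snoc.prems(3) snoc.prems(4)] XY by simp
    qed
    then have "mat_prod_list Xs = mat_prod_list Xs0 * Y" by simp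
    then have "mat_prod_list Xs \<in> Sigma_pat (iter_star (ps@[p]))"
      using star_sigma[OF ci _ pp _ Yp] IH it by simp
    moreover have "pat_pos (iter_star (ps@[p]))" using star_pos[OF ci _ pp] IH it by simp
    moreover have "\<forall>q. chainable_pat (last (ps@[p])) q \<longrightarrow> chainable_pat (iter_star (ps@[p])) q"
      using star_chain[OF ci] it by simp
    ultimately show ?thesis by blast
  qed
qed

lemma chain_take: "chain ps \<Longrightarrow> chain (take s ps)"
  unfolding chain_def
proof (intro conjI allI impI)
  assume c: "(\<forall>p\<in>set ps. pat_pos p) \<and> (\<forall>l. Suc l < length ps \<longrightarrow> chainable_pat (ps!l) (ps!Suc l))"
  show "\<forall>p\<in>set (take s ps). pat_pos p" using c by (meson in_set_takeD)
  fix l assume l: "Suc l < length (take s ps)"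
  then show "chainable_pat (take s ps ! l) (take s ps ! Suc l)" using c by simp
qed

lemma chain_drop: "chain ps \<Longrightarrow> chain (drop s ps)"
  unfolding chain_def
proof (intro conjI allI impI)
  assume c: "(\<forall>p\<in>set ps. pat_pos p) \<and> (\<forall>l. Suc l < length ps \<longrightarrow> chainable_pat (ps!l) (ps!Suc l))"
  show "\<forall>p\<in>set (drop s ps). pat_pos p" using c by (meson in_set_dropD)
  fix l assume l: "Suc l < length (drop s ps)"
  then have "Suc (s + l) < length ps" by simp
  then have "chainable_pat (ps!(s+l)) (ps!Suc (s+l))" using c by blast
  then show "chainable_pat (drop s ps ! l) (drop s ps ! Suc l)" using l by simp
qed

lemma subset_split:
  assumes ch: "chain \<beta>" and s: "1 \<le> s" "s < length \<beta>"
  shows "B_arch \<beta> \<subseteq> B_arch (beta_split \<beta> s)"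
proof
  fix M assume "M \<in> B_arch \<beta>"
  then obtain Xs where M: "M = mat_prod_list Xs" and len: "length Xs = length \<beta>"
    and S: "\<forall>l<length \<beta>. Xs!l \<in> Sigma_pat (\<beta>!l)" unfolding B_arch_def by blast
  have t1: "take s \<beta> \<noteq> []" "drop s \<beta> \<noteq> []" using s by auto
  have S1: "\<forall>l<length (take s \<beta>). take s Xs ! l \<in> Sigma_pat (take s \<beta> ! l)" using S by simp
  have S2: "\<forall>l<length (drop s \<beta>). drop s Xs ! l \<in> Sigma_pat (drop s \<beta> ! l)"
  proof (intro allI impI)
    fix l assume "l < length (drop s \<beta>)"
    then have "s + l < length \<beta>" by simp
    then show "drop s Xs ! l \<in> Sigma_pat (drop s \<beta> ! l)" using S len by simp
  qed
  have m1: "mat_prod_list (take s Xs) \<in> Sigma_pat (iter_star (take s \<beta>))"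
    using main_ind[OF t1(1) chain_take[OF ch] _ S1] len by simp
  have m2: "mat_prod_list (drop s Xs) \<in> Sigma_pat (iter_star (drop s \<beta>))"
    using main_ind[OF t1(2) chain_drop[OF ch] _ S2] len by simp
  have "M = mat_prod_list (take s Xs @ drop s Xs)" using M by simp
  also have "\<dots> = mat_prod_list (take s Xs) * mat_prod_list (drop s Xs)"
  proof (rule mpl_append[where r = "rr \<beta>"])
    show "take s Xs \<noteq> []" "drop s Xs \<noteq> []" using s len by auto
    show "\<forall>l<length (take s Xs @ drop s Xs). (take s Xs @ drop s Xs) ! l \<in> carrier_mat (rr \<beta> l) (rr \<beta> (Suc l))"
      using sig_carrier[OF ch len S] by simp
  qed
  also have "\<dots> = mat_prod_list [mat_prod_list (take s Xs), mat_prod_list (drop s Xs)]" by simp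
  finally have "M = mat_prod_list [mat_prod_list (take s Xs), mat_prod_list (drop s Xs)]" .
  moreover have "\<forall>l<length (beta_split \<beta> s). [mat_prod_list (take s Xs), mat_prod_list (drop s Xs)] ! l \<in> Sigma_pat (beta_split \<beta> s ! l)"
    using m1 m2 by (auto simp: beta_split_def less_Suc_eq)
  moreover have "length [mat_prod_list (take s Xs), mat_prod_list (drop s Xs)] = length (beta_split \<beta> s)"
    by (simp add: beta_split_def)
  ultimately show "M \<in> B_arch (beta_split \<beta> s)" unfolding B_arch_def by blast
qed

lemma frob_nonneg: "0 \<le> frob_norm M"
  unfolding frob_norm_def by (simp add: sum_nonneg)

lemma B_nonempty: "B_arch \<beta> \<noteq> {}"
proof -
  let ?Xs = "map (\<lambda>p. 0\<^sub>m (pat_rows p) (pat_cols p)) \<beta>"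
  have "\<forall>l<length \<beta>. ?Xs!l \<in> Sigma_pat (\<beta>!l)" by (simp add: Sigma_pat_def)
  then have "mat_prod_list ?Xs \<in> B_arch \<beta>" unfolding B_arch_def by auto
  then show ?thesis by blast
qed

theorem lemma7p5:
  fixes \<beta> :: "pattern list"
  assumes "chainable_arch \<beta>" and "length \<beta> \<ge> 2"
  shows "(\<forall>s\<in>{1..length \<beta> - 1}. B_arch \<beta> \<subseteq> B_arch (beta_split \<beta> s))
    \<and> (\<forall>A :: complex mat. dim_row A = pat_rows (hd \<beta>) \<and> dim_col A = pat_cols (last \<beta>) \<longrightarrow>
         E_arch \<beta> A \<ge> Max ((\<lambda>s. E_arch (beta_split \<beta> s) A) ` {1..length \<beta> - 1}))"
proof -
  have ch: "chain \<beta>" using assms(1) unfolding chainable_arch_def architecture_def chain_def by blast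
  have sub: "\<forall>s\<in>{1..length \<beta> - 1}. B_arch \<beta> \<subseteq> B_arch (beta_split \<beta> s)"
  proof
    fix s assume "s \<in> {1..length \<beta> - 1}"
    then have "1 \<le> s" "s < length \<beta>" using assms(2) by auto
    then show "B_arch \<beta> \<subseteq> B_arch (beta_split \<beta> s)" by (rule subset_split[OF ch])
  qed
  have le: "E_arch (beta_split \<beta> s) A \<le> E_arch \<beta> A" if "s \<in> {1..length \<beta> - 1}" for s A
    unfolding E_arch_def
  proof (rule cINF_superset_mono)
    show "B_arch \<beta> \<noteq> {}" by (rule B_nonempty)
    show "bdd_below ((\<lambda>B. frob_norm (A - B)) ` B_arch (beta_split \<beta> s))"
      by (rule bdd_belowI[where m=0]) (auto simp: frob_nonneg)
    show "B_arch \<beta> \<subseteq> B_arch (beta_split \<beta> s)" using sub that by blast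
  qed simp
  have ne: "{1..length \<beta> - 1} \<noteq> {}" using assms(2) by simp
  show ?thesis
  proof (intro conjI allI impI)
    show "\<forall>s\<in>{1..length \<beta> - 1}. B_arch \<beta> \<subseteq> B_arch (beta_split \<beta> s)" by (rule sub)
    fix A :: "complex mat"
    show "E_arch \<beta> A \<ge> Max ((\<lambda>s. E_arch (beta_split \<beta> s) A) ` {1..length \<beta> - 1})"
      using ne le by (intro Max.boundedI) auto
  qed
qed

end
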